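(* Let $f\in\mathrm{Homeo}(\mathbb T^2)$ be semiconjugate to a rigid rotation $R_\rho$ of $\mathbb S^1$ and assume the non-wandering set $\Omega(f)$ is externally transitive. Then the semiconjugacy is unique modulo rotations: for any two semiconjugacies $h_1,h_2$ from $f$ to $R_\rho$ there is a rigid rotation $R$ of $\mathbb S^1$ with $h_1=R\circ h_2$ on all of $\mathbb T^2$.
   Context: A semiconjugacy from $f$ to $R_\rho(x)=x+\rho$ is a continuous surjection $h:\mathbb T^2\to\mathbb S^1$ with $h\circ f=R_\rho\circ h$. An $f$-invariant set $\Omega$ is externally transitive if for all $x,y\in\Omega$ and neighbourhoods $U_x,U_y$ in $\mathbb T^2$ there is $n\in\mathbb N$ with $f^n(U_x)\cap U_y\ne\emptyset$. *)

theory Defs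
  imports "HOL-Analysis.Analysis"
begin

definition S1 :: "complex set" where
  "S1 = sphere 0 1"

definition T2 :: "(complex \<times> complex) set" where
  "T2 = S1 \<times> S1"

text \<open>Rigid rotation R_rho(x) = x + rho on R/Z, i.e. multiplication by exp(2 pi i rho).\<close>

definition rot :: "real \<Rightarrow> complex \<Rightarrow> complex" where
  "rot \<rho> z = cis (2 * pi * \<rho>) * z"

definition semiconj ::
  "(complex \<times> complex \<Rightarrow> complex \<times> complex) \<Rightarrow> real \<Rightarrow> (complex \<times> complex \<Rightarrow> complex) \<Rightarrow> bool" where
  "semiconj f \<rho> h \<longleftrightarrow>
     continuous_on T2 h \<and> h ` T2 = S1 \<and> (\<forall>x\<in>T2. h (f x) = rot \<rho> (h x))"

definition nonwandering :: "(complex \<times> complex \<Rightarrow> complex \<times> complex) \<Rightarrow> (complex \<times> complex) set" where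
  "nonwandering f = {x \<in> T2. \<forall>U. open U \<and> x \<in> U \<longrightarrow>
      (\<exists>n\<ge>1. (f ^^ n) ` (U \<inter> T2) \<inter> (U \<inter> T2) \<noteq> {})}"

definition externally_transitive ::
  "(complex \<times> complex \<Rightarrow> complex \<times> complex) \<Rightarrow> (complex \<times> complex) set \<Rightarrow> bool" where
  "externally_transitive f \<Omega> \<longleftrightarrow>
     (\<forall>x\<in>\<Omega>. \<forall>y\<in>\<Omega>. \<forall>U V. open U \<and> x \<in> U \<and> open V \<and> y \<in> V \<longrightarrow>
        (\<exists>n\<ge>1. (f ^^ n) ` (U \<inter> T2) \<inter> (V \<inter> T2) \<noteq> {}))"

end

theory Submission
  imports Defs
begin

lemma T2_compact: "compact T2"
  unfolding T2_def S1_def by (intro compact_Times compact_sphere)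

theorem mainTheorem9:
  fixes f :: "complex \<times> complex \<Rightarrow> complex \<times> complex" and \<rho> :: real
  assumes "\<exists>g. homeomorphism T2 T2 f g"
    and "\<exists>h. semiconj f \<rho> h"
    and "externally_transitive f (nonwandering f)"
  shows "\<forall>h1 h2. semiconj f \<rho> h1 \<and> semiconj f \<rho> h2 \<longrightarrow>
           (\<exists>\<alpha>::real. \<forall>x\<in>T2. h1 x = rot \<alpha> (h2 x))"
proof (intro allI impI)
  fix h1 h2
  assume H: "semiconj f \<rho> h1 \<and> semiconj f \<rho> h2"
  have fT: "f ` T2 = T2" using assms(1) unfolding homeomorphism_def by blast
  have fin: "x \<in> T2 \<Longrightarrow> f x \<in> T2" for x using fT by blast
  have fnin: "x \<in> T2 \<Longrightarrow> (f ^^ n) x \<in> T2" for x n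
    by (induction n) (auto simp: fin)
  have h1S: "x \<in> T2 \<Longrightarrow> norm (h1 x) = 1" for x
    using H unfolding semiconj_def S1_def by auto
  have h2S: "x \<in> T2 \<Longrightarrow> norm (h2 x) = 1" for x
    using H unfolding semiconj_def S1_def by auto
  define \<phi> where "\<phi> x = h1 x / h2 x" for x
  have cont: "continuous_on T2 \<phi>"
    unfolding \<phi>_def using H h2S unfolding semiconj_def
    by (intro continuous_on_divide) (auto, fastforce)
  have inv1: "x \<in> T2 \<Longrightarrow> \<phi> (f x) = \<phi> x" for x
    using H unfolding semiconj_def \<phi>_def rot_def by auto
  have invn: "x \<in> T2 \<Longrightarrow> \<phi> ((f ^^ n) x) = \<phi> x" for x n
    by (induction n) (auto simp: inv1 fnin)
  have constW: "\<phi> x = \<phi> y" if xW: "x \<in> nonwandering f" and yW: "y \<in> nonwandering f" for x y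
  proof (rule ccontr)
    assume ne: "\<phi> x \<noteq> \<phi> y"
    define e where "e = dist (\<phi> x) (\<phi> y) / 2"
    have e: "e > 0" using ne unfolding e_def by auto
    have xT: "x \<in> T2" and yT: "y \<in> T2" using xW yW unfolding nonwandering_def by auto
    obtain d1 where d1: "d1 > 0" "\<forall>x'\<in>T2. dist x' x < d1 \<longrightarrow> dist (\<phi> x') (\<phi> x) < e"
      using cont xT e unfolding continuous_on_iff by meson
    obtain d2 where d2: "d2 > 0" "\<forall>x'\<in>T2. dist x' y < d2 \<longrightarrow> dist (\<phi> x') (\<phi> y) < e"
      using cont yT e unfolding continuous_on_iff by meson
    obtain n where "n \<ge> 1" and "(f ^^ n) ` (ball x d1 \<inter> T2) \<inter> (ball y d2 \<inter> T2) \<noteq> {}"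
      using assms(3) xW yW d1(1) d2(1) unfolding externally_transitive_def
      by (metis centre_in_ball open_ball)
    then obtain z where z: "z \<in> ball x d1" "z \<in> T2" "(f ^^ n) z \<in> ball y d2" "(f ^^ n) z \<in> T2"
      by blast
    have a: "dist (\<phi> z) (\<phi> x) < e" using d1(2) z(1,2) by (metis dist_commute mem_ball)
    have b: "dist (\<phi> z) (\<phi> y) < e" using d2(2) z(3,4) invn[OF z(2), of n] by (metis dist_commute mem_ball)
    have "dist (\<phi> x) (\<phi> y) < 2 * e" using a b dist_triangle3[of "\<phi> x" "\<phi> y" "\<phi> z"] by linarith
    then show False unfolding e_def by simp
  qed
  have reach: "\<exists>y\<in>nonwandering f. \<phi> y = \<phi> x" if xT: "x \<in> T2" for x
  proof -
    define s where "s n = (f ^^ n) x" for n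
    have sT: "\<And>n. s n \<in> T2" using fnin xT unfolding s_def by auto
    obtain l r where lT: "l \<in> T2" and r: "strict_mono r" and lim: "(s \<circ> r) \<longlonglongrightarrow> l"
      using compact_imp_seq_compact[OF T2_compact] sT unfolding seq_compact_def by meson
    have "((\<phi> \<circ> (s \<circ> r)) \<longlonglongrightarrow> \<phi> l)"
      using continuous_on_tendsto_compose[OF cont lim lT] sT by (auto simp: comp_def)
    moreover have "(\<phi> \<circ> (s \<circ> r)) = (\<lambda>_. \<phi> x)"
      using invn[OF xT] unfolding s_def by (simp add: comp_def)
    ultimately have "\<phi> l = \<phi> x" using LIMSEQ_unique tendsto_const by metis
    moreover have "l \<in> nonwandering f"
      unfolding nonwandering_def
    proof (safe intro!: lT)
      fix U assume U: "open U" "l \<in> U"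
      then obtain N where N: "\<forall>n\<ge>N. s (r n) \<in> U" using lim unfolding lim_explicit by auto
      have lt: "r N < r (Suc N)" using r by (simp add: strict_mono_def)
      define m where "m = r (Suc N) - r N"
      have "(f ^^ m) (s (r N)) = s (r (Suc N))"
        unfolding s_def m_def using lt
        by (metis funpow_add le_add_diff_inverse2 less_imp_le comp_def)
      then have "s (r (Suc N)) \<in> (f ^^ m) ` (U \<inter> T2) \<inter> (U \<inter> T2)"
        using N sT by (metis IntI image_eqI le_refl le_SucI)
      moreover have "m \<ge> 1" using lt unfolding m_def by simp
      ultimately show "\<exists>n\<ge>1. (f ^^ n) ` (U \<inter> T2) \<inter> (U \<inter> T2) \<noteq> {}" by blast
    qed
    ultimately show ?thesis by blast
  qed
  define p :: "complex \<times> complex" where "p = (1, 1)"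
  have pT: "p \<in> T2" unfolding p_def T2_def S1_def by simp
  define c where "c = \<phi> p"
  have allc: "x \<in> T2 \<Longrightarrow> \<phi> x = c" for x
    using reach[of x] reach[OF pT] constW unfolding c_def by metis
  have nc: "norm c = 1" unfolding c_def \<phi>_def using h1S[OF pT] h2S[OF pT] by (simp add: norm_divide)
  define \<alpha> where "\<alpha> = Arg c / (2 * pi)"
  have cis: "cis (2 * pi * \<alpha>) = c"
    unfolding \<alpha>_def using nc cis_Arg[of c] by (auto simp: sgn_div_norm) (metis nc norm_zero zero_neq_one)
  show "\<exists>\<alpha>::real. \<forall>x\<in>T2. h1 x = rot \<alpha> (h2 x)"
  proof (intro exI ballI)
    fix x assume xT: "x \<in> T2"
    have "h2 x \<noteq> 0" using h2S[OF xT] by auto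
    then show "h1 x = rot \<alpha> (h2 x)"
      using allc[OF xT] unfolding rot_def cis \<phi>_def by (simp add: field_simps)
  qed
qed

end
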